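(* Let $X$ and $Y$ be topological spaces. If $C(X)$ has the countable sup property and $Y$ is separable, then $C(X\times Y)$ has the countable sup property.
   Context: $C(Z)$ is the vector lattice of real-valued continuous functions on $Z$ with the pointwise order; $X\times Y$ has the product topology. A vector lattice has the countable sup property if every nonempty subset possessing a supremum contains a countable subset with the same supremum. *)

theory Defs
  imports "HOL-Analysis.Analysis"
begin

text \<open>Functions are made extensional (zero outside the carrier) so that each element
  of C(X) is represented by exactly one HOL function.\<close>
definition Cfun :: "'a topology \<Rightarrow> ('a \<Rightarrow> real) set" where
  "Cfun X = {f. continuous_map X euclideanreal f \<and> (\<forall>x. x \<notin> topspace X \<longrightarrow> f x = 0)}"

definition Cle :: "'a topology \<Rightarrow> ('a \<Rightarrow> real) \<Rightarrow> ('a \<Rightarrow> real) \<Rightarrow> bool" where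
  "Cle X f g \<longleftrightarrow> (\<forall>x\<in>topspace X. f x \<le> g x)"

definition is_sup_C :: "'a topology \<Rightarrow> ('a \<Rightarrow> real) set \<Rightarrow> ('a \<Rightarrow> real) \<Rightarrow> bool" where
  "is_sup_C X S s \<longleftrightarrow> s \<in> Cfun X \<and> (\<forall>f\<in>S. Cle X f s) \<and>
     (\<forall>u\<in>Cfun X. (\<forall>f\<in>S. Cle X f u) \<longrightarrow> Cle X s u)"

definition countable_sup_property :: "'a topology \<Rightarrow> bool" where
  "countable_sup_property X \<longleftrightarrow>
     (\<forall>S s. S \<subseteq> Cfun X \<and> S \<noteq> {} \<and> is_sup_C X S s \<longrightarrow>
        (\<exists>T. T \<subseteq> S \<and> countable T \<and> is_sup_C X T s))"

end

theory Submission
  imports Defs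
begin

definition coz_set :: "'a topology \<Rightarrow> 'a set \<Rightarrow> bool" where
  "coz_set Z C \<longleftrightarrow> (\<exists>g. continuous_map Z euclideanreal g \<and> C = {z\<in>topspace Z. g z \<noteq> 0})"

definition cdense :: "'a topology \<Rightarrow> 'a set \<Rightarrow> bool" where
  "cdense Z A \<longleftrightarrow> (\<forall>C. coz_set Z C \<and> C \<noteq> {} \<longrightarrow> C \<inter> A \<noteq> {})"

definition propP :: "'a topology \<Rightarrow> bool" where
  "propP Z \<longleftrightarrow> (\<forall>F. (\<forall>C\<in>F. coz_set Z C) \<and> cdense Z (\<Union>F) \<longrightarrow>
      (\<exists>G\<subseteq>F. countable G \<and> cdense Z (\<Union>G)))"

lemma coz_subset: "coz_set Z C \<Longrightarrow> C \<subseteq> topspace Z"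
  unfolding coz_set_def by auto

lemma coz_open: "coz_set Z C \<Longrightarrow> openin Z C"
proof -
  assume "coz_set Z C"
  then obtain g where g: "continuous_map Z euclideanreal g" "C = {z\<in>topspace Z. g z \<in> -{0}}"
    unfolding coz_set_def by auto
  show ?thesis unfolding g(2)
    by (rule openin_continuous_map_preimage[OF g(1)]) auto
qed

lemma coz_Int: "coz_set Z A \<Longrightarrow> coz_set Z B \<Longrightarrow> coz_set Z (A \<inter> B)"
proof -
  assume "coz_set Z A" "coz_set Z B"
  then obtain f g where f: "continuous_map Z euclideanreal f" "A = {z\<in>topspace Z. f z \<noteq> 0}"
    and g: "continuous_map Z euclideanreal g" "B = {z\<in>topspace Z. g z \<noteq> 0}"
    unfolding coz_set_def by metis
  have "continuous_map Z euclideanreal (\<lambda>z. f z * g z)"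
    using f g by (intro continuous_intros)
  moreover have "A \<inter> B = {z\<in>topspace Z. f z * g z \<noteq> 0}" using f g by auto
  ultimately show ?thesis unfolding coz_set_def by blast
qed

lemma coz_less:
  assumes "continuous_map Z euclideanreal f"
  shows "coz_set Z {z\<in>topspace Z. c < f z}"
proof -
  have "continuous_map Z euclideanreal (\<lambda>z. max 0 (f z - c))"
    using assms by (intro continuous_intros)
  moreover have "{z\<in>topspace Z. c < f z} = {z\<in>topspace Z. max 0 (f z - c) \<noteq> 0}" by auto
  ultimately show ?thesis unfolding coz_set_def by blast
qed

lemma cdense_mono: "cdense Z A \<Longrightarrow> A \<subseteq> B \<Longrightarrow> cdense Z B"
  unfolding cdense_def by blast

lemma Cfun_cont: "f \<in> Cfun Z \<Longrightarrow> continuous_map Z euclideanreal f"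
  unfolding Cfun_def by auto

lemma sup_char:
  assumes S: "S \<subseteq> Cfun Z" and s: "s \<in> Cfun Z" and ub: "\<forall>f\<in>S. Cle Z f s"
  shows "is_sup_C Z S s \<longleftrightarrow> (\<forall>e>0. cdense Z (\<Union>f\<in>S. {z\<in>topspace Z. s z - e < f z}))"
proof
  assume sup: "is_sup_C Z S s"
  show "\<forall>e>0. cdense Z (\<Union>f\<in>S. {z\<in>topspace Z. s z - e < f z})"
  proof (intro allI impI, rule ccontr)
    fix e :: real assume e: "e > 0" and nd: "\<not> cdense Z (\<Union>f\<in>S. {z\<in>topspace Z. s z - e < f z})"
    then obtain C where C: "coz_set Z C" "C \<noteq> {}" and dis: "C \<inter> (\<Union>f\<in>S. {z\<in>topspace Z. s z - e < f z}) = {}"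
      unfolding cdense_def by blast
    obtain g where g: "continuous_map Z euclideanreal g" "C = {z\<in>topspace Z. g z \<noteq> 0}"
      using C(1) unfolding coz_set_def by auto
    define u where "u = (\<lambda>z. if z \<in> topspace Z then s z - e * min 1 \<bar>g z\<bar> else 0)"
    have "continuous_map Z euclideanreal (\<lambda>z. s z - e * min 1 \<bar>g z\<bar>)"
      using g(1) Cfun_cont[OF s] by (intro continuous_intros)
    then have "continuous_map Z euclideanreal u"
      by (rule continuous_map_eq) (simp add: u_def)
    then have uC: "u \<in> Cfun Z" unfolding Cfun_def u_def by auto
    have "\<forall>f\<in>S. Cle Z f u"
    proof (intro ballI)
      fix f assume f: "f \<in> S"
      show "Cle Z f u" unfolding Cle_def
      proof
        fix z assume z: "z \<in> topspace Z"
        show "f z \<le> u z"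
        proof (cases "g z = 0")
          case True then show ?thesis using ub f z unfolding Cle_def u_def by auto
        next
          case False
          then have "z \<in> C" using g z by auto
          then have "z \<notin> {z\<in>topspace Z. s z - e < f z}" using dis f by blast
          then have "f z \<le> s z - e" using z by auto
          moreover have "e * min 1 \<bar>g z\<bar> \<le> e" using e by (simp add: mult_left_le)
          ultimately show ?thesis unfolding u_def using z by auto
        qed
      qed
    qed
    then have "Cle Z s u" using sup uC unfolding is_sup_C_def by auto
    moreover obtain z where z: "z \<in> C" using C(2) by auto
    then have "z \<in> topspace Z" "g z \<noteq> 0" using g by auto
    then have "u z < s z" unfolding u_def using e by auto
    ultimately show False using \<open>z \<in> topspace Z\<close> unfolding Cle_def by force
  qed
next
  assume cd: "\<forall>e>0. cdense Z (\<Union>f\<in>S. {z\<in>topspace Z. s z - e < f z})"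
  show "is_sup_C Z S s" unfolding is_sup_C_def
  proof (intro conjI s ub ballI impI)
    fix u assume uC: "u \<in> Cfun Z" and uub: "\<forall>f\<in>S. Cle Z f u"
    show "Cle Z s u" unfolding Cle_def
    proof (rule ballI, rule ccontr)
      fix z0 assume z0: "z0 \<in> topspace Z" and nle: "\<not> s z0 \<le> u z0"
      define d where "d = (s z0 - u z0) / 2"
      have d: "d > 0" using nle unfolding d_def by auto
      let ?C = "{z\<in>topspace Z. d < s z - u z}"
      have "coz_set Z ?C"
        using Cfun_cont[OF s] Cfun_cont[OF uC] by (intro coz_less continuous_intros)
      moreover have "?C \<noteq> {}" using z0 d unfolding d_def by auto
      ultimately obtain z f where "z \<in> ?C" "f \<in> S" "s z - d < f z"
        using cd d unfolding cdense_def by blast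
      moreover then have "f z \<le> u z" using uub unfolding Cle_def by auto
      ultimately show False by auto
    qed
  qed
qed

lemma coz_less2:
  assumes "continuous_map Z euclideanreal f" "continuous_map Z euclideanreal g"
  shows "coz_set Z {z\<in>topspace Z. g z < f z}"
proof -
  have "coz_set Z {z\<in>topspace Z. 0 < f z - g z}"
    using assms by (intro coz_less continuous_intros)
  moreover have "{z\<in>topspace Z. 0 < f z - g z} = {z\<in>topspace Z. g z < f z}" by auto
  ultimately show ?thesis by simp
qed

lemma propP_csp:
  assumes P: "propP Z"
  shows "countable_sup_property Z"
  unfolding countable_sup_property_def
proof (intro allI impI)
  fix S s assume H: "S \<subseteq> Cfun Z \<and> S \<noteq> {} \<and> is_sup_C Z S s"
  then have SC: "S \<subseteq> Cfun Z" and sup: "is_sup_C Z S s" by auto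
  then have sC: "s \<in> Cfun Z" and ub: "\<forall>f\<in>S. Cle Z f s" unfolding is_sup_C_def by auto
  define A where "A f n = {z\<in>topspace Z. s z - 1 / real (Suc n) < f z}" for f n
  have "\<forall>n. \<exists>T. T \<subseteq> S \<and> countable T \<and> cdense Z (\<Union>f\<in>T. A f n)"
  proof
    fix n
    have cd: "cdense Z (\<Union>f\<in>S. A f n)"
      using sup_char[OF SC sC ub] sup unfolding A_def by auto
    have "\<forall>C\<in>(\<lambda>f. A f n) ` S. coz_set Z C"
    proof
      fix C assume "C \<in> (\<lambda>f. A f n) ` S"
      then obtain f where f: "f \<in> S" "C = A f n" by auto
      show "coz_set Z C" unfolding f(2) A_def
        using Cfun_cont[OF sC] Cfun_cont f(1) SC
        by (intro coz_less2 continuous_intros) auto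
    qed
    then obtain G where G: "G \<subseteq> (\<lambda>f. A f n) ` S" "countable G" "cdense Z (\<Union>G)"
      using P cd unfolding propP_def by (metis image_image)
    then obtain T where "countable T" "T \<subseteq> S" "G = (\<lambda>f. A f n) ` T"
      using countable_subset_image[of G "\<lambda>f. A f n" S] by auto
    then show "\<exists>T. T \<subseteq> S \<and> countable T \<and> cdense Z (\<Union>f\<in>T. A f n)" using G by auto
  qed
  then obtain TT where TT: "\<And>n. TT n \<subseteq> S" "\<And>n. countable (TT n)" "\<And>n. cdense Z (\<Union>f\<in>TT n. A f n)"
    by metis
  define T where "T = (\<Union>n. TT n)"
  have TS: "T \<subseteq> S" using TT unfolding T_def by auto
  have "is_sup_C Z T s"
  proof (subst sup_char)
    show "T \<subseteq> Cfun Z" using TS SC by auto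
    show "s \<in> Cfun Z" by fact
    show "\<forall>f\<in>T. Cle Z f s" using TS ub by auto
    show "\<forall>e>0. cdense Z (\<Union>f\<in>T. {z \<in> topspace Z. s z - e < f z})"
    proof (intro allI impI)
      fix e :: real assume e: "e > 0"
      then obtain n where n: "inverse (real (Suc n)) < e" using reals_Archimedean by blast
      show "cdense Z (\<Union>f\<in>T. {z \<in> topspace Z. s z - e < f z})"
      proof (rule cdense_mono[OF TT(3)[of n]])
        have ne: "1 / real (Suc n) < e" using n by (simp add: inverse_eq_divide)
        show "(\<Union>f\<in>TT n. A f n) \<subseteq> (\<Union>f\<in>T. {z \<in> topspace Z. s z - e < f z})"
        proof
          fix z assume "z \<in> (\<Union>f\<in>TT n. A f n)"
          then obtain f where f: "f \<in> TT n" "z \<in> topspace Z" "s z - 1/real (Suc n) < f z"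
            unfolding A_def by auto
          then have "s z - e < f z" using ne by linarith
          moreover have "f \<in> T" using f(1) unfolding T_def by auto
          ultimately show "z \<in> (\<Union>f\<in>T. {z \<in> topspace Z. s z - e < f z})" using f(2) by auto
        qed
      qed
    qed
  qed
  moreover have "countable T" using TT unfolding T_def by auto
  ultimately show "\<exists>T. T \<subseteq> S \<and> countable T \<and> is_sup_C Z T s" using TS by auto
qed

lemma csp_propP:
  assumes csp: "countable_sup_property X"
  shows "propP X"
  unfolding propP_def
proof (intro allI impI)
  fix F assume H: "(\<forall>C\<in>F. coz_set X C) \<and> cdense X (\<Union>F)"
  show "\<exists>G\<subseteq>F. countable G \<and> cdense X (\<Union>G)"
  proof (cases "F = {}")
    case True then show ?thesis using H by auto
  next
    case False
    define gg where "gg C = (SOME g. continuous_map X euclideanreal g \<and> C = {z\<in>topspace X. g z \<noteq> 0})" for C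
    have gg: "continuous_map X euclideanreal (gg C) \<and> C = {z\<in>topspace X. gg C z \<noteq> 0}" if "C\<in>F" for C
    proof -
      have "\<exists>g. continuous_map X euclideanreal g \<and> C = {z\<in>topspace X. g z \<noteq> 0}"
        using H that unfolding coz_set_def by auto
      then show ?thesis unfolding gg_def by (rule someI_ex)
    qed
    define h where "h = (\<lambda>(C,n::nat) z. if z\<in>topspace X then min 1 (real n * \<bar>gg C z\<bar>) else 0)"
    define S where "S = h ` (F \<times> UNIV)"
    define s where "s = (\<lambda>z. if z \<in> topspace X then 1 else (0::real))"
    have SC: "S \<subseteq> Cfun X"
    proof
      fix f assume "f \<in> S"
      then obtain C n where Cn: "C \<in> F" "f = h (C,n)" unfolding S_def by auto
      have "continuous_map X euclideanreal (\<lambda>z. min 1 (real n * \<bar>gg C z\<bar>))"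
        using gg[OF Cn(1)] by (intro continuous_intros) auto
      then have "continuous_map X euclideanreal f"
        by (rule continuous_map_eq) (simp add: Cn(2) h_def)
      then show "f \<in> Cfun X" unfolding Cfun_def Cn(2) h_def by auto
    qed
    have sC: "s \<in> Cfun X"
    proof -
      have "continuous_map X euclideanreal s"
        by (rule continuous_map_eq[of _ _ "\<lambda>z. 1"]) (auto simp: s_def)
      then show ?thesis unfolding Cfun_def s_def by auto
    qed
    have ub: "\<forall>f\<in>S. Cle X f s" unfolding S_def Cle_def h_def s_def by auto
    have "is_sup_C X S s"
    proof (subst sup_char[OF SC sC ub], intro allI impI)
      fix e :: real assume e: "e > 0"
      show "cdense X (\<Union>f\<in>S. {z \<in> topspace X. s z - e < f z})"
        unfolding cdense_def
      proof (intro allI impI)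
        fix C' assume "coz_set X C' \<and> C' \<noteq> {}"
        then obtain z C where z: "z \<in> C'" "C \<in> F" "z \<in> C" using H unfolding cdense_def by blast
        then have zt: "z \<in> topspace X" and gz: "gg C z \<noteq> 0" using gg[OF z(2)] by auto
        obtain n where n: "1 / \<bar>gg C z\<bar> < real n" using reals_Archimedean2 by blast
        then have "1 < real n * \<bar>gg C z\<bar>" using gz by (simp add: field_simps)
        then have "h (C,n) z = 1" unfolding h_def using zt by auto
        then have "s z - e < h (C,n) z" using zt e by (simp add: s_def)
        moreover have "h (C,n) \<in> S" unfolding S_def using z(2) by auto
        ultimately have "z \<in> (\<Union>f\<in>S. {z \<in> topspace X. s z - e < f z})"
          using zt by blast
        then show "C' \<inter> (\<Union>f\<in>S. {z \<in> topspace X. s z - e < f z}) \<noteq> {}" using z(1) by blast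
      qed
    qed
    moreover have "S \<noteq> {}" using False unfolding S_def by auto
    ultimately obtain T where T: "T \<subseteq> S" "countable T" "is_sup_C X T s"
      using csp SC unfolding countable_sup_property_def by blast
    then obtain T' where T': "countable T'" "T' \<subseteq> F \<times> UNIV" "T = h ` T'"
      using countable_subset_image[of T h "F \<times> UNIV"] unfolding S_def by auto
    have all: "\<forall>e>0. cdense X (\<Union>f\<in>T. {z \<in> topspace X. s z - e < f z})"
      using sup_char[of T X s] T SC sC ub by auto
    have "cdense X (\<Union>f\<in>T. {z \<in> topspace X. s z - 1/2 < f z})"
      using all[rule_format, of "1/2"] by simp
    moreover have "(\<Union>f\<in>T. {z \<in> topspace X. s z - 1/2 < f z}) \<subseteq> \<Union>(fst ` T')"
    proof
      fix z assume "z \<in> (\<Union>f\<in>T. {z \<in> topspace X. s z - 1/2 < f z})"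
      then obtain C n where Cn: "(C,n) \<in> T'" "z \<in> topspace X" "s z - 1/2 < h (C,n) z"
        using T'(3) by auto
      then have "gg C z \<noteq> 0" unfolding h_def s_def by auto
      moreover have "C \<in> F" using Cn T'(2) by auto
      ultimately have "z \<in> C" using gg Cn(2) by auto
      then show "z \<in> \<Union>(fst ` T')" using Cn(1) by force
    qed
    ultimately have "cdense X (\<Union>(fst ` T'))" by (rule cdense_mono)
    moreover have "fst ` T' \<subseteq> F" using T'(2) by auto
    ultimately show ?thesis using T'(1) by blast
  qed
qed

definition sec :: "'a set \<Rightarrow> 'b \<Rightarrow> 'a topology \<Rightarrow> ('a \<times> 'b) set \<Rightarrow> 'a set" where
  "sec T y X W = {x\<in>topspace X. (x,y) \<in> W}"

lemma sec_coz:
  assumes "coz_set (prod_topology X Y) W" "y \<in> topspace Y"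
  shows "coz_set X (sec (topspace X) y X W)"
proof -
  obtain g where g: "continuous_map (prod_topology X Y) euclideanreal g"
    "W = {z\<in>topspace (prod_topology X Y). g z \<noteq> 0}"
    using assms(1) unfolding coz_set_def by auto
  have "continuous_map X (prod_topology X Y) (\<lambda>x. (x, y))"
    using assms(2) by (intro continuous_map_pairedI) auto
  then have "continuous_map X euclideanreal (g \<circ> (\<lambda>x. (x, y)))"
    using g(1) by (rule continuous_map_compose)
  moreover have "sec (topspace X) y X W = {x\<in>topspace X. (g \<circ> (\<lambda>x. (x, y))) x \<noteq> 0}"
    unfolding sec_def g(2) using assms(2) by auto
  ultimately show ?thesis unfolding coz_set_def by blast
qed

lemma prod_propP:
  assumes P: "propP X" and sep: "separable_space Y"
  shows "propP (prod_topology X Y)"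
  unfolding propP_def
proof (intro allI impI)
  obtain D where D: "countable D" "D \<subseteq> topspace Y" "\<And>T. openin Y T \<Longrightarrow> T \<noteq> {} \<Longrightarrow> D \<inter> T \<noteq> {}"
    using sep unfolding separable_space_def dense_intersects_open by blast
  fix F assume H: "(\<forall>C\<in>F. coz_set (prod_topology X Y) C) \<and> cdense (prod_topology X Y) (\<Union>F)"
  let ?sc = "\<lambda>y W. sec (topspace X) y X W"
  define FF where "FF y = (?sc y) ` F \<union> {C. coz_set X C \<and> (\<forall>W\<in>F. C \<inter> ?sc y W = {})}" for y
  have "\<forall>y\<in>D. \<exists>I G. I \<subseteq> F \<and> countable I \<and> G \<subseteq> FF y \<and> countable G \<and> cdense X (\<Union>G)
           \<and> G \<inter> (?sc y) ` F \<subseteq> (?sc y) ` I"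
  proof
    fix y assume y: "y \<in> D"
    then have yt: "y \<in> topspace Y" using D by auto
    have c1: "\<forall>C\<in>FF y. coz_set X C"
      unfolding FF_def using H sec_coz[OF _ yt] by auto
    have c2: "cdense X (\<Union>(FF y))"
      unfolding cdense_def
    proof (intro allI impI)
      fix C assume C: "coz_set X C \<and> C \<noteq> {}"
      show "C \<inter> \<Union>(FF y) \<noteq> {}"
      proof (cases "\<exists>W\<in>F. C \<inter> ?sc y W \<noteq> {}")
        case True then show ?thesis unfolding FF_def by blast
      next
        case False
        then have "C \<in> FF y" using C unfolding FF_def by auto
        then show ?thesis using C by blast
      qed
    qed
    obtain G where G: "G \<subseteq> FF y" "countable G" "cdense X (\<Union>G)"
      using P c1 c2 unfolding propP_def by metis
    have "countable (G \<inter> (?sc y) ` F)" using G(2) by auto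
    then obtain I where "countable I" "I \<subseteq> F" "G \<inter> (?sc y) ` F = (?sc y) ` I"
      using countable_subset_image[of "G \<inter> (?sc y) ` F" "?sc y" F] by auto
    then show "\<exists>I G. I \<subseteq> F \<and> countable I \<and> G \<subseteq> FF y \<and> countable G \<and> cdense X (\<Union>G)
           \<and> G \<inter> (?sc y) ` F \<subseteq> (?sc y) ` I" using G by blast
  qed
  then obtain II GG where IG: "\<And>y. y \<in> D \<Longrightarrow> II y \<subseteq> F \<and> countable (II y) \<and> GG y \<subseteq> FF y
      \<and> countable (GG y) \<and> cdense X (\<Union>(GG y)) \<and> GG y \<inter> (?sc y) ` F \<subseteq> (?sc y) ` (II y)"
    by metis
  define I where "I = (\<Union>y\<in>D. II y)"
  have "I \<subseteq> F" unfolding I_def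
  proof (rule UN_least)
    fix y assume "y \<in> D" then show "II y \<subseteq> F" using IG by blast
  qed
  moreover have "countable I" unfolding I_def
  proof (rule countable_UN[OF D(1)])
    fix y assume "y \<in> D" then show "countable (II y)" using IG by blast
  qed
  moreover have "cdense (prod_topology X Y) (\<Union>I)"
    unfolding cdense_def
  proof (intro allI impI)
    fix G assume G: "coz_set (prod_topology X Y) G \<and> G \<noteq> {}"
    then obtain z0 W where zW: "z0 \<in> G" "W \<in> F" "z0 \<in> W" using H unfolding cdense_def by blast
    obtain x0 y0 where z0: "z0 = (x0, y0)" by (cases z0)
    have cGW: "coz_set (prod_topology X Y) (G \<inter> W)" using G zW H by (intro coz_Int) auto
    then have "openin (prod_topology X Y) (G \<inter> W)" by (rule coz_open)
    then obtain U V where UV: "openin X U" "openin Y V" "x0 \<in> U" "y0 \<in> V" "U \<times> V \<subseteq> G \<inter> W"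
      using zW z0 unfolding openin_prod_topology_alt by blast
    then obtain y1 where y1: "y1 \<in> D" "y1 \<in> V" using D(3)[of V] by blast
    have y1t: "y1 \<in> topspace Y" using y1 D by auto
    have x0t: "x0 \<in> topspace X" using UV openin_subset by blast
    let ?C = "?sc y1 (G \<inter> W)"
    have cC: "coz_set X ?C" using sec_coz[OF cGW y1t] .
    have x0C: "x0 \<in> ?C" using UV y1 x0t unfolding sec_def by auto
    obtain x E where xE: "x \<in> ?C" "E \<in> GG y1" "x \<in> E"
      using IG[OF y1(1)] cC x0C unfolding cdense_def by blast
    then have "E \<in> FF y1" using IG[OF y1(1)] by auto
    then consider (a) "E \<in> (?sc y1) ` F" | (b) "\<forall>W\<in>F. E \<inter> ?sc y1 W = {}"
      unfolding FF_def by blast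
    then show "G \<inter> \<Union>I \<noteq> {}"
    proof cases
      case a
      then have "E \<in> (?sc y1) ` (II y1)" using IG[OF y1(1)] xE(2) by blast
      then obtain W'' where "W'' \<in> II y1" "E = ?sc y1 W''" by auto
      moreover have "(x, y1) \<in> G" using xE(1) unfolding sec_def by auto
      ultimately have "(x, y1) \<in> G \<inter> \<Union>I" using xE(3) y1(1) unfolding I_def sec_def by auto
      then show ?thesis by blast
    next
      case b
      have "x \<in> ?sc y1 W" using xE(1) unfolding sec_def by auto
      then show ?thesis using b zW(2) xE(3) by blast
    qed
  qed
  ultimately show "\<exists>G\<subseteq>F. countable G \<and> cdense (prod_topology X Y) (\<Union>G)" by blast
qed

theorem corollary6p3:
  fixes X :: "'a topology" and Y :: "'b topology"
  assumes "countable_sup_property X"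
    and "separable_space Y"
  shows "countable_sup_property (prod_topology X Y)"
  by (rule propP_csp[OF prod_propP[OF csp_propP[OF assms(1)] assms(2)]])

end
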